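(* For every $p\ge2$ (i.e. $m=2^p>2$), the Sylvester matrix $H(2^p)$ has nonzero permanent. Consequently, when $n=m=2^p>2$ identical bosons are injected one per mode into the Sylvester interferometer $\frac{1}{\sqrt m}H(m)$, the output state with one boson in each mode is not suppressed.
   Context: For $m=2^p$, the Sylvester matrix $H(m)$ is defined recursively by $H(1)=[1]$ and $H(2^p)=\begin{bmatrix}H(2^{p-1})&H(2^{p-1})\\ H(2^{p-1})&-H(2^{p-1})\end{bmatrix}$. $\mathrm{perm}\,A=\sum_{\sigma\in S_m}\prod_{i=1}^m a_{i,\sigma(i)}$. For input $\vec s$ and output $\vec t$ (nondecreasing tuples of mode indices), the scattering matrix is $S_{i,j}=U_{t_i,s_j}$ and the bosonic amplitude is $\mathrm{perm}\,S/\sqrt{\prod_k\mu_k(\vec s)!\prod_k\mu_k(\vec t)!}$ with $\mu_k(\vec t)=|\{i:t_i=k\}|$; an output is suppressed if its amplitude is zero. *)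

theory Defs
  imports Complex_Main "HOL-Combinatorics.Permutations"
begin

text \<open>Sylvester matrix H(2^p), modes/indices 0-based (rows and columns 0..2^p-1),
  defined by the recursive block construction.\<close>
fun sylvester :: "nat \<Rightarrow> nat \<Rightarrow> nat \<Rightarrow> int" where
  "sylvester 0 i j = 1"
| "sylvester (Suc p) i j =
     (let h = 2 ^ p in
      if i < h \<and> j < h then sylvester p i j
      else if i < h then sylvester p i (j - h)
      else if j < h then sylvester p (i - h) j
      else - sylvester p (i - h) (j - h))"

definition perm :: "nat \<Rightarrow> (nat \<Rightarrow> nat \<Rightarrow> 'a::comm_ring_1) \<Rightarrow> 'a" where
  "perm n A = (\<Sum>\<sigma>\<in>{\<sigma>. \<sigma> permutes {..<n}}. \<Prod>i<n. A i (\<sigma> i))"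

definition mult :: "nat list \<Rightarrow> nat \<Rightarrow> nat" where
  "mult t k = length (filter (\<lambda>x. x = k) t)"

definition scattering :: "(nat \<Rightarrow> nat \<Rightarrow> complex) \<Rightarrow> nat list \<Rightarrow> nat list \<Rightarrow> nat \<Rightarrow> nat \<Rightarrow> complex" where
  "scattering U s t i j = U (t ! i) (s ! j)"

text \<open>Bosonic amplitude; modes not occurring contribute 0! = 1 to the products.\<close>
definition amplitude :: "(nat \<Rightarrow> nat \<Rightarrow> complex) \<Rightarrow> nat list \<Rightarrow> nat list \<Rightarrow> complex" where
  "amplitude U s t = perm (length s) (scattering U s t) /
     complex_of_real (sqrt (real ((\<Prod>k\<in>set s. fact (mult s k)) * (\<Prod>k\<in>set t. fact (mult t k)))))"

definition suppressed :: "(nat \<Rightarrow> nat \<Rightarrow> complex) \<Rightarrow> nat list \<Rightarrow> nat list \<Rightarrow> bool" where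
  "suppressed U s t \<longleftrightarrow> amplitude U s t = 0"

end

theory Submission
  imports Defs
begin


lemma syl_Suc:
  assumes "i < 2 * 2^k" "j < 2 * 2^k"
  shows "sylvester (Suc k) i j = sylvester k (i mod 2^k) (j mod 2^k) * (if 2^k \<le> i \<and> 2^k \<le> j then -1 else 1)"
  using assms by (auto simp: Let_def le_mod_geq not_less)

lemma syl_pm1: "sylvester k i j = 1 \<or> sylvester k i j = -1"
  by (induction k arbitrary: i j) (auto simp: Let_def)

lemma syl_sq: "sylvester k i j * sylvester k i j = 1"
  using syl_pm1[of k i j] by auto

lemma syl_0row: "sylvester k 0 j = 1"
  by (induction k arbitrary: j) (auto simp: Let_def)

fun vx :: "nat \<Rightarrow> nat \<Rightarrow> nat \<Rightarrow> nat" where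
  "vx 0 x y = 0"
| "vx (Suc k) x y = vx k (x mod 2^k) (y mod 2^k) + (if (2^k \<le> x) = (2^k \<le> y) then 0 else 2^k)"

lemma vx_lt: "vx k x y < 2^k"
proof (induction k arbitrary: x y)
  case 0 then show ?case by simp
next
  case (Suc k)
  have "vx k (x mod 2^k) (y mod 2^k) < 2^k" by (rule Suc.IH)
  then show ?case by auto
qed

lemma vx_sym: "vx k x y = vx k y x"
  by (induction k arbitrary: x y) auto

lemma vx_mult:
  assumes "i < 2^k" "x < 2^k" "y < 2^k"
  shows "sylvester k i (vx k x y) = sylvester k i x * sylvester k i y"
  using assms
proof (induction k arbitrary: i x y)
  case 0 then show ?case by simp
next
  case (Suc k)
  let ?h = "2^k::nat"
  let ?z = "vx (Suc k) x y"
  have zl: "?z < 2 * ?h" using vx_lt[of "Suc k" x y] by simp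
  have il: "i < 2 * ?h" "x < 2 * ?h" "y < 2*?h" using Suc.prems by auto
  have w: "vx k (x mod ?h) (y mod ?h) < ?h" by (rule vx_lt)
  have zm: "?z mod ?h = vx k (x mod ?h) (y mod ?h)"
  proof (cases "(?h \<le> x) = (?h \<le> y)")
    case True then show ?thesis using w by simp
  next
    case False then show ?thesis using w by simp
  qed
  have zt: "(?h \<le> ?z) = ((?h \<le> x) \<noteq> (?h \<le> y))" using w by auto
  have IH: "sylvester k (i mod ?h) (vx k (x mod ?h) (y mod ?h)) =
      sylvester k (i mod ?h) (x mod ?h) * sylvester k (i mod ?h) (y mod ?h)"
    by (rule Suc.IH) auto
  have e: "sylvester (Suc k) i ?z = sylvester k (i mod ?h) (x mod ?h) * sylvester k (i mod ?h) (y mod ?h)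
     * (if ?h \<le> i \<and> ((?h \<le> x) \<noteq> (?h \<le> y)) then -1 else 1)"
    unfolding syl_Suc[OF il(1) zl] zm zt IH by simp
  show ?case
    unfolding e syl_Suc[OF il(1) il(2)] syl_Suc[OF il(1) il(3)]
    by (cases "?h \<le> i"; cases "?h \<le> x"; cases "?h \<le> y") simp_all
qed



definition bijs :: "nat set \<Rightarrow> nat set \<Rightarrow> (nat \<Rightarrow> nat) set" where
  "bijs R C = {f. f \<in> R \<rightarrow>\<^sub>E C \<and> bij_betw f R C}"

lemma finite_bijs: "finite R \<Longrightarrow> finite C \<Longrightarrow> finite (bijs R C)"
  unfolding bijs_def by (rule finite_subset[of _ "R \<rightarrow>\<^sub>E C"]) (auto intro: finite_PiE)

definition sw :: "nat \<Rightarrow> nat set \<Rightarrow> nat \<Rightarrow> nat" where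
  "sw h S j = (if j < h \<and> j \<in> S then j + h else if h \<le> j \<and> j < 2*h \<and> j - h \<in> S then j - h else j)"

lemma sw_sw[simp]: "sw h S (sw h S j) = j"
  unfolding sw_def by auto

lemma sw_out: "\<not> j < 2*h \<Longrightarrow> sw h S j = j"
  unfolding sw_def by auto

lemma sw_range: "j < 2*h \<Longrightarrow> sw h S j < 2*h"
  unfolding sw_def by auto

lemma sw_bij: "bij_betw (sw h S) {..<2*h} {..<2*h}"
  by (rule bij_betw_byWitness[where f'="sw h S"]) (auto simp: sw_range)

lemma sw_lo: "i < h \<Longrightarrow> sw h S i = (if i \<in> S then i + h else i)"
  unfolding sw_def by auto

lemma sw_hi: "i < h \<Longrightarrow> sw h S (i + h) = (if i \<in> S then i else i + h)"
  unfolding sw_def by auto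

lemma comp_sw_bijs:
  assumes "f \<in> bijs {..<2*h} C"
  shows "f \<circ> sw h S \<in> bijs {..<2*h} C"
proof -
  have f: "f \<in> {..<2*h} \<rightarrow>\<^sub>E C" "bij_betw f {..<2*h} C" using assms by (auto simp: bijs_def)
  have "f \<circ> sw h S \<in> {..<2*h} \<rightarrow>\<^sub>E C"
    using f(1) sw_range[of _ h S] sw_out[of _ h S] by (auto simp: PiE_iff extensional_def)
  moreover have "bij_betw (f \<circ> sw h S) {..<2*h} C"
    by (rule bij_betw_trans[OF sw_bij f(2)])
  ultimately show ?thesis by (simp add: bijs_def)
qed

definition Ord :: "nat \<Rightarrow> nat set \<Rightarrow> (nat \<Rightarrow> nat) set" where
  "Ord h C = {f \<in> bijs {..<2*h} C. \<forall>i<h. f i < f (i + h)}"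

lemma swap_decomp:
  assumes h: "0 < h"
  shows "bij_betw (\<lambda>(f,S). f \<circ> sw h S) (Ord h C \<times> Pow {..<h}) (bijs {..<2*h} C)"
proof (rule bij_betwI')
  fix x y assume x: "x \<in> Ord h C \<times> Pow {..<h}" and y: "y \<in> Ord h C \<times> Pow {..<h}"
  obtain f S where xe: "x = (f,S)" by (cases x)
  obtain g T where ye: "y = (g,T)" by (cases y)
  have fo: "\<forall>i<h. f i < f (i+h)" and go: "\<forall>i<h. g i < g (i+h)" and ST: "S \<subseteq> {..<h}" "T \<subseteq> {..<h}"
    using x y xe ye by (auto simp: Ord_def)
  show "((\<lambda>(f,S). f \<circ> sw h S) x = (\<lambda>(f,S). f \<circ> sw h S) y) = (x = y)"
  proof
    assume eq: "(\<lambda>(f,S). f \<circ> sw h S) x = (\<lambda>(f,S). f \<circ> sw h S) y"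
    hence eq': "\<And>j. f (sw h S j) = g (sw h T j)" using xe ye by (auto dest: fun_cong)
    have "S = T"
    proof (rule ccontr)
      assume "S \<noteq> T"
      then obtain i where i: "i < h" "(i \<in> S) \<noteq> (i \<in> T)" using ST by blast
      have e1: "f (sw h S i) = g (sw h T i)" and e2: "f (sw h S (i+h)) = g (sw h T (i+h))"
        using eq' by auto
      show False
      proof (cases "i \<in> S")
        case True
        with i have "i \<notin> T" by auto
        with True e1 e2 i have "f (i+h) = g i" "f i = g (i + h)" by (auto simp: sw_lo sw_hi)
        with fo go i show False by force
      next
        case False
        with i have "i \<in> T" by auto
        with False e1 e2 i have "f i = g (i+h)" "f (i+h) = g i" by (auto simp: sw_lo sw_hi)
        with fo go i show False by force
      qed
    qed
    moreover have "f = g"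
    proof
      fix j show "f j = g j" using eq'[of "sw h S j"] \<open>S = T\<close> by simp
    qed
    ultimately show "x = y" using xe ye by simp
  qed simp
next
  fix x assume "x \<in> Ord h C \<times> Pow {..<h}"
  then show "(\<lambda>(f,S). f \<circ> sw h S) x \<in> bijs {..<2*h} C"
    by (auto simp: Ord_def intro: comp_sw_bijs)
next
  fix g assume g: "g \<in> bijs {..<2*h} C"
  define S where "S = {i. i < h \<and> g (i+h) < g i}"
  define f where "f = g \<circ> sw h S"
  have fb: "f \<in> bijs {..<2*h} C" unfolding f_def by (rule comp_sw_bijs[OF g])
  have inj: "inj_on g {..<2*h}" using g by (auto simp: bijs_def bij_betw_def)
  have "\<forall>i<h. f i < f (i+h)"
  proof (intro allI impI)
    fix i assume i: "i < h"
    show "f i < f (i+h)"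
    proof (cases "i \<in> S")
      case True then show ?thesis using i by (simp add: f_def sw_lo sw_hi S_def)
    next
      case False
      hence "g i \<le> g (i+h)" using i by (auto simp: S_def)
      moreover have "g i \<noteq> g (i+h)" using inj i by (auto dest: inj_onD)
      ultimately show ?thesis using False i by (simp add: f_def sw_lo sw_hi)
    qed
  qed
  hence "f \<in> Ord h C" using fb by (simp add: Ord_def)
  moreover have "f \<circ> sw h S = g" by (auto simp: f_def)
  moreover have "S \<in> Pow {..<h}" by (auto simp: S_def)
  ultimately show "\<exists>x\<in>Ord h C \<times> Pow {..<h}. g = (\<lambda>(f,S). f \<circ> sw h S) x" by force
qed



declare sylvester.simps(2)[simp del]

definition P :: "nat \<Rightarrow> nat set \<Rightarrow> (nat \<Rightarrow> nat) \<Rightarrow> int" where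
  "P k C v = (\<Sum>f\<in>bijs {..<2^k} C. \<Prod>i<2^k. sylvester k i (v (f i)))"

definition eps :: "nat \<Rightarrow> (nat \<Rightarrow> nat) \<Rightarrow> nat \<Rightarrow> int" where
  "eps h v c = (if h \<le> v c then -1 else 1)"

definition phi :: "nat \<Rightarrow> (nat \<Rightarrow> nat) \<Rightarrow> nat \<Rightarrow> nat \<Rightarrow> nat \<Rightarrow> int" where
  "phi k v i a b = sylvester k i (v a mod 2^k) * sylvester k i (v b mod 2^k) * eps (2^k) v b"

definition wv :: "nat \<Rightarrow> (nat \<Rightarrow> nat) \<Rightarrow> nat \<Rightarrow> nat \<Rightarrow> nat" where
  "wv k v a b = vx k (v a mod 2^k) (v b mod 2^k)"

lemma prod_split2: "(\<Prod>i<2*h. g i) = (\<Prod>i<h. g i * g (i + h))" for g :: "nat \<Rightarrow> int"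
proof -
  have U: "{..<2*h} = {..<h} \<union> (\<lambda>i. i + h) ` {..<h}"
  proof
    show "{..<2*h} \<subseteq> {..<h} \<union> (\<lambda>i. i + h) ` {..<h}"
    proof
      fix x assume "x \<in> {..<2*h}"
      then show "x \<in> {..<h} \<union> (\<lambda>i. i + h) ` {..<h}"
        by (cases "x < h") (auto intro!: image_eqI[of _ _ "x - h"])
    qed
  qed auto
  have "(\<Prod>i<2*h. g i) = (\<Prod>i<h. g i) * (\<Prod>i\<in>(\<lambda>i. i + h) ` {..<h}. g i)"
    unfolding U by (rule prod.union_disjoint) auto
  also have "(\<Prod>i\<in>(\<lambda>i. i + h) ` {..<h}. g i) = (\<Prod>i<h. g (i + h))"
    by (subst prod.reindex) (auto simp: inj_on_def)
  finally show ?thesis by (simp add: prod.distrib)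
qed

lemma step1:
  fixes f v :: "nat \<Rightarrow> nat" and k :: nat
  assumes f: "f \<in> bijs {..<2*2^k} C" and v: "\<forall>c\<in>C. v c < 2*2^k"
  shows "(\<Prod>i\<in>{..<2*2^k}. sylvester (Suc k) i (v (f i))) = (\<Prod>i\<in>{..<2^k}. phi k v i (f i) (f (i + 2^k)))"
proof -
  have fc: "\<And>j. j < 2*2^k \<Longrightarrow> f j \<in> C" using f by (auto simp: bijs_def)
  have "(\<Prod>i\<in>{..<2*2^k}. sylvester (Suc k) i (v (f i))) =
     (\<Prod>i<2^k. sylvester (Suc k) i (v (f i)) * sylvester (Suc k) (i + 2^k) (v (f (i + 2^k))))"
    by (rule prod_split2)
  also have "\<dots> = (\<Prod>i<2^k. phi k v i (f i) (f (i + 2^k)))"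
  proof (rule prod.cong[OF refl])
    fix i :: nat assume i: "i \<in> {..<2^k}"
    have a: "v (f i) < 2*2^k" "v (f (i+2^k)) < 2*2^k" using fc v i by auto
    have i1: "i < 2*2^k" "i + 2^k < 2*2^k" using i by auto
    show "sylvester (Suc k) i (v (f i)) * sylvester (Suc k) (i + 2^k) (v (f (i + 2^k))) = phi k v i (f i) (f (i + 2^k))"
      unfolding syl_Suc[OF i1(1) a(1)] syl_Suc[OF i1(2) a(2)] phi_def eps_def using i by auto
  qed
  finally show ?thesis .
qed

lemma prod_if_set:
  fixes a b :: "nat \<Rightarrow> int"
  assumes "S \<subseteq> A" "finite A"
  shows "(\<Prod>i\<in>A. if i \<in> S then a i else b i) = (\<Prod>i\<in>S. a i) * (\<Prod>i\<in>A - S. b i)"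
proof -
  have "(\<Prod>i\<in>A. if i \<in> S then a i else b i) = (\<Prod>i\<in>A \<inter> {x. x \<in> S}. a i) * (\<Prod>i\<in>A \<inter> - {x. x \<in> S}. b i)"
    by (rule prod.If_cases) (rule assms)
  moreover have "A \<inter> {x. x \<in> S} = S" "A \<inter> - {x. x \<in> S} = A - S" using assms by auto
  ultimately show ?thesis by simp
qed

lemma step2:
  assumes v: "\<forall>c\<in>C. v c < 2*2^k"
  shows "P (Suc k) C v = (\<Sum>f\<in>Ord (2^k) C. \<Prod>i<2^k. phi k v i (f i) (f (i + 2^k)) + phi k v i (f (i + 2^k)) (f i))"
proof -
  let ?h = "2^k :: nat"
  have "P (Suc k) C v = (\<Sum>g\<in>bijs {..<2*?h} C. \<Prod>i<?h. phi k v i (g i) (g (i + ?h)))"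
    unfolding P_def by (rule sum.cong) (auto simp: step1[OF _ v])
  also have "\<dots> = (\<Sum>x\<in>Ord ?h C \<times> Pow {..<?h}. (\<lambda>g. \<Prod>i<?h. phi k v i (g i) (g (i + ?h))) ((\<lambda>(f,S). f \<circ> sw ?h S) x))"
    by (rule sum.reindex_bij_betw[symmetric]) (rule swap_decomp, simp)
  also have "\<dots> = (\<Sum>f\<in>Ord ?h C. \<Sum>S\<in>Pow {..<?h}. \<Prod>i<?h. phi k v i (f (sw ?h S i)) (f (sw ?h S (i + ?h))))"
    by (simp add: sum.cartesian_product split_def)
  also have "\<dots> = (\<Sum>f\<in>Ord ?h C. \<Prod>i<?h. phi k v i (f i) (f (i + ?h)) + phi k v i (f (i + ?h)) (f i))"
  proof (rule sum.cong[OF refl])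
    fix f
    have "(\<Sum>S\<in>Pow {..<?h}. \<Prod>i<?h. phi k v i (f (sw ?h S i)) (f (sw ?h S (i + ?h)))) =
          (\<Sum>S\<in>Pow {..<?h}. (\<Prod>i\<in>S. phi k v i (f (i + ?h)) (f i)) * (\<Prod>i\<in>{..<?h} - S. phi k v i (f i) (f (i + ?h))))"
    proof (rule sum.cong[OF refl])
      fix S assume S: "S \<in> Pow {..<?h}"
      have "(\<Prod>i<?h. phi k v i (f (sw ?h S i)) (f (sw ?h S (i + ?h)))) =
            (\<Prod>i<?h. if i \<in> S then phi k v i (f (i + ?h)) (f i) else phi k v i (f i) (f (i + ?h)))"
        by (rule prod.cong[OF refl]) (simp add: sw_lo sw_hi)
      also have "\<dots> = (\<Prod>i\<in>S. phi k v i (f (i + ?h)) (f i)) * (\<Prod>i\<in>{..<?h} - S. phi k v i (f i) (f (i + ?h)))"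
        using S by (intro prod_if_set) auto
      finally show "(\<Prod>i<?h. phi k v i (f (sw ?h S i)) (f (sw ?h S (i + ?h)))) =
            (\<Prod>i\<in>S. phi k v i (f (i + ?h)) (f i)) * (\<Prod>i\<in>{..<?h} - S. phi k v i (f i) (f (i + ?h)))" .
    qed
    also have "\<dots> = (\<Prod>i<?h. phi k v i (f (i + ?h)) (f i) + phi k v i (f i) (f (i + ?h)))"
      by (rule prod_add[symmetric]) simp
    finally show "(\<Sum>S\<in>Pow {..<?h}. \<Prod>i<?h. phi k v i (f (sw ?h S i)) (f (sw ?h S (i + ?h)))) =
          (\<Prod>i<?h. phi k v i (f i) (f (i + ?h)) + phi k v i (f (i + ?h)) (f i))"
      by (simp add: add.commute)
  qed
  finally show ?thesis .
qed



lemma phi_pair: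
  assumes i: "i < 2^k" and a: "v a < 2*2^k" and b: "v b < 2*2^k"
  shows "phi k v i a b + phi k v i b a =
    (if (2^k \<le> v a) = (2^k \<le> v b) then 2 * eps (2^k) v a * sylvester k i (wv k v a b) else 0)"
proof -
  have m: "sylvester k i (wv k v a b) = sylvester k i (v a mod 2^k) * sylvester k i (v b mod 2^k)"
    unfolding wv_def by (rule vx_mult) (use i in auto)
  show ?thesis unfolding m phi_def eps_def by auto
qed

lemma prod_ifz:
  fixes e g :: "nat \<Rightarrow> int"
  shows "(\<Prod>i<h. if T i then 2 * e i * g i else 0) =
     (if (\<forall>i<h. T i) then 2^h * (\<Prod>i<h. e i) * (\<Prod>i<h. g i) else 0)"
proof (cases "\<forall>i<h. T i")
  case True
  hence "(\<Prod>i<h. if T i then 2 * e i * g i else 0) = (\<Prod>i<h. 2 * (e i * g i))"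
    by (intro prod.cong) auto
  also have "\<dots> = 2^h * ((\<Prod>i<h. e i) * (\<Prod>i<h. g i))"
    by (simp add: prod.distrib)
  finally show ?thesis using True by simp
next
  case False
  then obtain j where j: "j < h" "\<not> T j" by auto
  have z: "(\<Prod>i<h. if T i then 2 * e i * g i else 0) = 0"
    by (rule prod_zero) (use j in auto)
  show ?thesis unfolding z using False by (simp only: if_False)
qed

lemma prod_sign:
  "finite A \<Longrightarrow> (\<Prod>i\<in>A. if Q i then -1 else 1 :: int) = (-1) ^ card {i\<in>A. Q i}"
proof -
  assume fA: "finite A"
  have "(\<Prod>i\<in>A. if Q i then -1 else 1 :: int) = (\<Prod>i\<in>A \<inter> {x. Q x}. -1) * (\<Prod>i\<in>A \<inter> - {x. Q x}. 1)"
    by (rule prod.If_cases[OF fA])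
  also have "A \<inter> {x. Q x} = {i\<in>A. Q i}" by auto
  finally show ?thesis by simp
qed

definition valid :: "nat \<Rightarrow> (nat \<Rightarrow> nat) \<Rightarrow> (nat \<Rightarrow> nat) \<Rightarrow> bool" where
  "valid h v f = (\<forall>i<h. (h \<le> v (f i)) = (h \<le> v (f (i + h))))"

lemma eps_prod:
  assumes f: "f \<in> bijs {..<2*h} C" and val: "valid h v f"
  shows "(\<Prod>i<h. eps h v (f i)) = (-1) ^ (card {c\<in>C. h \<le> v c} div 2)"
proof -
  let ?Q = "\<lambda>c. h \<le> v c"
  have bij: "bij_betw f {..<2*h} C" using f by (auto simp: bijs_def)
  have "{c\<in>C. ?Q c} = f ` {j\<in>{..<2*h}. ?Q (f j)}"
    using bij by (auto simp: bij_betw_def)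
  hence c1: "card {c\<in>C. ?Q c} = card {j\<in>{..<2*h}. ?Q (f j)}"
    using bij by (metis (no_types, lifting) bij_betw_def card_image inj_on_subset mem_Collect_eq subsetI)
  let ?A = "{i\<in>{..<h}. ?Q (f i)}"
  have sp: "{j\<in>{..<2*h}. ?Q (f j)} = ?A \<union> (\<lambda>i. i + h) ` ?A"
  proof
    show "{j\<in>{..<2*h}. ?Q (f j)} \<subseteq> ?A \<union> (\<lambda>i. i + h) ` ?A"
    proof
      fix j assume j: "j \<in> {j\<in>{..<2*h}. ?Q (f j)}"
      show "j \<in> ?A \<union> (\<lambda>i. i + h) ` ?A"
      proof (cases "j < h")
        case True then show ?thesis using j by auto
      next
        case False
        hence "j - h < h" "j = (j - h) + h" using j by auto
        moreover have "?Q (f (j - h))" using val j \<open>j - h < h\<close> \<open>j = (j - h) + h\<close> unfolding valid_def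
          by (metis (mono_tags, lifting) mem_Collect_eq)
        ultimately show ?thesis by (auto intro!: image_eqI[of _ _ "j - h"])
      qed
    qed
    show "?A \<union> (\<lambda>i. i + h) ` ?A \<subseteq> {j\<in>{..<2*h}. ?Q (f j)}"
      using val unfolding valid_def by auto
  qed
  have "card {j\<in>{..<2*h}. ?Q (f j)} = card ?A + card ((\<lambda>i. i + h) ` ?A)"
    unfolding sp by (rule card_Un_disjoint) auto
  also have "card ((\<lambda>i. i + h) ` ?A) = card ?A" by (rule card_image) (auto simp: inj_on_def)
  finally have "card {c\<in>C. ?Q c} div 2 = card ?A" using c1 by simp
  moreover have "(\<Prod>i<h. eps h v (f i)) = (-1) ^ card ?A"
    unfolding eps_def by (rule prod_sign) simp
  ultimately show ?thesis by simp
qed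

definition G :: "nat \<Rightarrow> (nat \<Rightarrow> nat) \<Rightarrow> (nat \<Rightarrow> nat) \<Rightarrow> int" where
  "G k v f = (\<Prod>i<2^k. sylvester k i (wv k v (f i) (f (i + 2^k))))"

lemma step3:
  assumes v: "\<forall>c\<in>C. v c < 2*2^k" and fC: "finite C"
  shows "P (Suc k) C v = 2^(2^k) * (-1) ^ (card {c\<in>C. 2^k \<le> v c} div 2) *
            (\<Sum>f\<in>{f\<in>Ord (2^k) C. valid (2^k) v f}. G k v f)"
proof -
  let ?h = "2^k :: nat"
  let ?s = "(-1::int) ^ (card {c\<in>C. 2^k \<le> v c} div 2)"
  have finO: "finite (Ord ?h C)"
    by (rule finite_subset[OF _ finite_bijs[of "{..<2*?h}" C]]) (auto simp: Ord_def fC)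
  have "P (Suc k) C v = (\<Sum>f\<in>Ord ?h C. \<Prod>i<?h. phi k v i (f i) (f (i + ?h)) + phi k v i (f (i + ?h)) (f i))"
    by (rule step2[OF v])
  also have "\<dots> = (\<Sum>f\<in>Ord ?h C. if valid ?h v f then 2^?h * ?s * G k v f else 0)"
  proof (rule sum.cong[OF refl])
    fix f assume fO: "f \<in> Ord ?h C"
    have fb: "f \<in> bijs {..<2*?h} C" using fO by (simp add: Ord_def)
    have fc: "\<And>j. j < 2*?h \<Longrightarrow> v (f j) < 2*?h" using fb v by (auto simp: bijs_def PiE_iff)
    have "(\<Prod>i<?h. phi k v i (f i) (f (i + ?h)) + phi k v i (f (i + ?h)) (f i)) =
          (\<Prod>i<?h. if (?h \<le> v (f i)) = (?h \<le> v (f (i + ?h))) then 2 * eps ?h v (f i) * sylvester k i (wv k v (f i) (f (i + ?h))) else 0)"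
      by (rule prod.cong[OF refl]) (rule phi_pair, auto intro!: fc)
    also have "\<dots> = (if valid ?h v f then 2^?h * (\<Prod>i<?h. eps ?h v (f i)) * G k v f else 0)"
      unfolding prod_ifz valid_def G_def by simp
    also have "\<dots> = (if valid ?h v f then 2^?h * ?s * G k v f else 0)"
      using eps_prod[OF fb] by simp
    finally show "(\<Prod>i<?h. phi k v i (f i) (f (i + ?h)) + phi k v i (f (i + ?h)) (f i)) =
          (if valid ?h v f then 2^?h * ?s * G k v f else 0)" .
  qed
  also have "\<dots> = (\<Sum>f\<in>{f\<in>Ord ?h C. valid ?h v f}. 2^?h * ?s * G k v f)"
    by (rule sum.inter_filter[OF finO, symmetric])
  also have "\<dots> = 2^?h * ?s * (\<Sum>f\<in>{f\<in>Ord ?h C. valid ?h v f}. G k v f)"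
    by (simp add: sum_distrib_left)
  finally show ?thesis .
qed



definition PM :: "(nat \<Rightarrow> bool) \<Rightarrow> nat set \<Rightarrow> (nat \<Rightarrow> nat) set" where
  "PM t C = {\<mu>. (\<forall>z. z \<notin> C \<longrightarrow> \<mu> z = z) \<and> (\<forall>z\<in>C. \<mu> z \<in> C \<and> \<mu> z \<noteq> z \<and> \<mu> (\<mu> z) = z \<and> t (\<mu> z) = t z)}"

definition Em :: "nat set \<Rightarrow> (nat \<Rightarrow> nat) \<Rightarrow> nat set" where
  "Em C \<mu> = {a\<in>C. a < \<mu> a}"

definition Psi :: "nat \<Rightarrow> (nat \<Rightarrow> nat) \<Rightarrow> (nat \<Rightarrow> nat) \<Rightarrow> nat \<Rightarrow> nat" where
  "Psi h \<mu> \<beta> = (\<lambda>j. if j < h then \<beta> j else if j < 2*h then \<mu> (\<beta> (j - h)) else undefined)"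

definition mu :: "nat \<Rightarrow> nat set \<Rightarrow> (nat \<Rightarrow> nat) \<Rightarrow> nat \<Rightarrow> nat" where
  "mu h C f = (\<lambda>c. if c \<in> C then f (sw h {..<h} (inv_into {..<2*h} f c)) else c)"

lemma PM_D:
  assumes "\<mu> \<in> PM t C" "z \<in> C"
  shows "\<mu> z \<in> C" "\<mu> z \<noteq> z" "\<mu> (\<mu> z) = z" "t (\<mu> z) = t z"
  using assms by (auto simp: PM_def)

lemma PM_out: "\<mu> \<in> PM t C \<Longrightarrow> z \<notin> C \<Longrightarrow> \<mu> z = z"
  by (auto simp: PM_def)

lemma Em_not: "\<mu> \<in> PM t C \<Longrightarrow> a \<in> Em C \<mu> \<Longrightarrow> \<mu> a \<notin> Em C \<mu>"
proof -
  assume m: "\<mu> \<in> PM t C" and a: "a \<in> Em C \<mu>"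
  hence "a \<in> C" "a < \<mu> a" by (auto simp: Em_def)
  hence "\<not> \<mu> a < \<mu> (\<mu> a)" using PM_D(3)[OF m] by simp
  then show ?thesis by (simp add: Em_def)
qed

lemma Em_comp: "\<mu> \<in> PM t C \<Longrightarrow> c \<in> C \<Longrightarrow> c \<notin> Em C \<mu> \<Longrightarrow> \<mu> c \<in> Em C \<mu>"
proof -
  assume m: "\<mu> \<in> PM t C" and c: "c \<in> C" and n: "c \<notin> Em C \<mu>"
  have a: "\<mu> c \<in> C" "\<mu> c \<noteq> c" "\<mu> (\<mu> c) = c" using PM_D[OF m c] by auto
  have "\<not> c < \<mu> c" using n c by (simp add: Em_def)
  hence "\<mu> c < \<mu> (\<mu> c)" using a by simp
  then show ?thesis using a by (simp add: Em_def)
qed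

lemma Psi_mem:
  assumes mu: "\<mu> \<in> PM (\<lambda>c. h \<le> v c) C" and b: "\<beta> \<in> bijs {..<h} (Em C \<mu>)"
  shows "Psi h \<mu> \<beta> \<in> {f\<in>Ord h C. valid h v f}"
proof -
  let ?E = "Em C \<mu>"
  let ?f = "Psi h \<mu> \<beta>"
  have bb: "bij_betw \<beta> {..<h} ?E" and bp: "\<beta> \<in> {..<h} \<rightarrow>\<^sub>E ?E" using b by (auto simp: bijs_def)
  have bE: "\<And>i. i < h \<Longrightarrow> \<beta> i \<in> ?E" using bp by auto
  have EC: "?E \<subseteq> C" by (auto simp: Em_def)
  have bC: "\<And>i. i < h \<Longrightarrow> \<beta> i \<in> C" using bE EC by auto
  have binj: "inj_on \<beta> {..<h}" using bb by (auto simp: bij_betw_def)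
  have fpi: "?f \<in> {..<2*h} \<rightarrow>\<^sub>E C"
    using bC PM_D(1)[OF mu] by (auto simp: Psi_def PiE_iff extensional_def)
  have inj: "inj_on ?f {..<2*h}"
  proof (rule inj_onI)
    fix x y assume x: "x \<in> {..<2*h}" and y: "y \<in> {..<2*h}" and e: "?f x = ?f y"
    show "x = y"
    proof (cases "x < h"; cases "y < h")
      assume "x < h" "y < h" then show ?thesis using e binj by (auto simp: Psi_def dest: inj_onD)
    next
      assume "x < h" "\<not> y < h"
      hence "\<beta> x = \<mu> (\<beta> (y - h))" using e y by (auto simp: Psi_def)
      moreover have "\<beta> x \<in> ?E" "\<beta> (y - h) \<in> ?E" using bE \<open>x < h\<close> \<open>\<not> y < h\<close> y by auto
      ultimately show ?thesis using Em_not[OF mu] by metis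
    next
      assume "\<not> x < h" "y < h"
      hence "\<beta> y = \<mu> (\<beta> (x - h))" using e x by (auto simp: Psi_def)
      moreover have "\<beta> y \<in> ?E" "\<beta> (x - h) \<in> ?E" using bE \<open>y < h\<close> \<open>\<not> x < h\<close> x by auto
      ultimately show ?thesis using Em_not[OF mu] by metis
    next
      assume "\<not> x < h" "\<not> y < h"
      hence "\<mu> (\<beta> (x - h)) = \<mu> (\<beta> (y - h))" using e x y by (auto simp: Psi_def)
      hence "\<mu> (\<mu> (\<beta> (x - h))) = \<mu> (\<mu> (\<beta> (y - h)))" by simp
      hence "\<beta> (x - h) = \<beta> (y - h)" using PM_D(3)[OF mu] bC \<open>\<not> x < h\<close> \<open>\<not> y < h\<close> x y by auto
      hence "x - h = y - h" using binj \<open>\<not> x < h\<close> \<open>\<not> y < h\<close> x y by (auto dest: inj_onD)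
      then show ?thesis using \<open>\<not> x < h\<close> \<open>\<not> y < h\<close> by auto
    qed
  qed
  have img: "?f ` {..<2*h} = C"
  proof
    show "?f ` {..<2*h} \<subseteq> C" using fpi by (auto simp: PiE_iff)
    show "C \<subseteq> ?f ` {..<2*h}"
    proof
      fix c assume c: "c \<in> C"
      show "c \<in> ?f ` {..<2*h}"
      proof (cases "c \<in> ?E")
        case True
        then obtain i where "i < h" "c = \<beta> i" using bb by (auto simp: bij_betw_def)
        then show ?thesis by (auto simp: Psi_def intro!: image_eqI[of _ _ i])
      next
        case False
        hence "\<mu> c \<in> ?E" by (rule Em_comp[OF mu c])
        then obtain i where i: "i < h" "\<mu> c = \<beta> i" using bb by (auto simp: bij_betw_def)
        hence "c = \<mu> (\<beta> i)" using PM_D(3)[OF mu c] by simp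
        moreover have "?f (i + h) = \<mu> (\<beta> i)" using i by (simp add: Psi_def)
        moreover have "i + h \<in> {..<2*h}" using i by simp
        ultimately show ?thesis by (metis image_eqI)
      qed
    qed
  qed
  have fb: "?f \<in> bijs {..<2*h} C" using fpi inj img by (simp add: bijs_def bij_betw_def)
  have ord: "\<forall>i<h. ?f i < ?f (i + h)" using bE by (auto simp: Psi_def Em_def)
  have val: "valid h v ?f" unfolding valid_def using bC PM_D(4)[OF mu] by (auto simp: Psi_def)
  show ?thesis using fb ord val by (simp add: Ord_def)
qed

lemma mu_app:
  assumes f: "f \<in> bijs {..<2*h} C" and j: "j < 2*h"
  shows "mu h C f (f j) = f (sw h {..<h} j)"
proof -
  have bb: "bij_betw f {..<2*h} C" using f by (auto simp: bijs_def)
  have "f j \<in> C" using bb j by (auto simp: bij_betw_def)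
  moreover have "inv_into {..<2*h} f (f j) = j" using bb j by (auto simp: bij_betw_def inv_into_f_f)
  ultimately show ?thesis by (simp add: mu_def)
qed

lemma sw_half_lo: "i < h \<Longrightarrow> sw h {..<h} i = i + h" by (simp add: sw_def)
lemma sw_half_hi: "h \<le> j \<Longrightarrow> j < 2*h \<Longrightarrow> sw h {..<h} j = j - h" by (simp add: sw_def)

lemma mu_mem:
  assumes h: "0 < h" and f: "f \<in> {f\<in>Ord h C. valid h v f}"
  shows "mu h C f \<in> PM (\<lambda>c. h \<le> v c) C"
    and "restrict f {..<h} \<in> bijs {..<h} (Em C (mu h C f))"
proof -
  have fb: "f \<in> bijs {..<2*h} C" and ord: "\<forall>i<h. f i < f (i + h)" and val: "valid h v f"
    using f by (auto simp: Ord_def)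
  have bb: "bij_betw f {..<2*h} C" using fb by (auto simp: bijs_def)
  have finj: "inj_on f {..<2*h}" using bb by (auto simp: bij_betw_def)
  have fC: "\<And>j. j < 2*h \<Longrightarrow> f j \<in> C" using bb by (auto simp: bij_betw_def)
  have fs: "\<And>c. c \<in> C \<Longrightarrow> \<exists>j<2*h. c = f j" using bb by (auto simp: bij_betw_def)
  let ?m = "mu h C f"
  have swr: "\<And>j. j < 2*h \<Longrightarrow> sw h {..<h} j < 2*h" by (rule sw_range)
  have swne: "\<And>j. j < 2*h \<Longrightarrow> sw h {..<h} j \<noteq> j" using h by (auto simp: sw_def)
  have tv: "\<And>j. j < 2*h \<Longrightarrow> (h \<le> v (f (sw h {..<h} j))) = (h \<le> v (f j))"
  proof -
    fix j assume j: "j < 2*h"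
    show "(h \<le> v (f (sw h {..<h} j))) = (h \<le> v (f j))"
    proof (cases "j < h")
      case True then show ?thesis using val by (simp add: sw_half_lo valid_def)
    next
      case False
      hence "j - h < h" "j = (j - h) + h" using j by auto
      moreover have "sw h {..<h} j = j - h" using False j by (intro sw_half_hi) auto
      moreover have "(h \<le> v (f (j - h))) = (h \<le> v (f (j - h + h)))" using val \<open>j - h < h\<close> unfolding valid_def by blast
      ultimately show ?thesis by simp
    qed
  qed
  show PMm: "?m \<in> PM (\<lambda>c. h \<le> v c) C"
    unfolding PM_def
  proof (intro CollectI conjI allI impI ballI)
    fix z assume "z \<notin> C" then show "?m z = z" by (simp add: mu_def)
  next
    fix z assume z: "z \<in> C"
    then obtain j where j: "j < 2*h" "z = f j" using fs by blast
    have mz: "?m z = f (sw h {..<h} j)" using mu_app[OF fb j(1)] j by simp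
    show "?m z \<in> C" using mz fC swr j by simp
    show "?m z \<noteq> z" using mz j swne[OF j(1)] swr[OF j(1)] inj_onD[OF finj, of "sw h {..<h} j" j] by auto
    show "?m (?m z) = z" using mz mu_app[OF fb swr[OF j(1)]] j by simp
    show "(h \<le> v (?m z)) = (h \<le> v z)" using mz tv j by simp
  qed
  have Eeq: "Em C ?m = f ` {..<h}"
  proof
    show "f ` {..<h} \<subseteq> Em C ?m"
    proof
      fix c assume "c \<in> f ` {..<h}"
      then obtain i where i: "i < h" "c = f i" by auto
      have "?m c = f (i + h)" using mu_app[OF fb, of i] i by (simp add: sw_half_lo)
      then show "c \<in> Em C ?m" using ord i fC by (simp add: Em_def)
    qed
    show "Em C ?m \<subseteq> f ` {..<h}"
    proof
      fix c assume c: "c \<in> Em C ?m"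
      then obtain j where j: "j < 2*h" "c = f j" using fs by (auto simp: Em_def)
      show "c \<in> f ` {..<h}"
      proof (cases "j < h")
        case True then show ?thesis using j by auto
      next
        case False
        have "?m c = f (j - h)" using mu_app[OF fb j(1)] j False sw_half_hi[of h j] by simp
        moreover have "f (j - h) < f j"
        proof -
          have "j - h < h" "j - h + h = j" using False j by auto
          moreover have "f (j - h) < f (j - h + h)" using ord \<open>j - h < h\<close> by blast
          ultimately show ?thesis by simp
        qed
        ultimately show ?thesis using c j by (simp add: Em_def)
      qed
    qed
  qed
  have "inj_on f {..<h}" by (rule inj_on_subset[OF finj]) auto
  hence "bij_betw f {..<h} (Em C ?m)" using Eeq by (simp add: bij_betw_def)
  hence "bij_betw (restrict f {..<h}) {..<h} (Em C ?m)" by (rule bij_betw_cong[THEN iffD1, rotated]) simp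
  moreover have "restrict f {..<h} \<in> {..<h} \<rightarrow>\<^sub>E Em C ?m" using Eeq by auto
  ultimately show "restrict f {..<h} \<in> bijs {..<h} (Em C ?m)" by (simp add: bijs_def)
qed



lemma PM_inv: "\<mu> \<in> PM t C \<Longrightarrow> \<mu> (\<mu> z) = z"
  by (cases "z \<in> C") (auto simp: PM_def)

lemma PM_permutes: "\<mu> \<in> PM t C \<Longrightarrow> \<mu> permutes C"
  unfolding permutes_def
proof (intro conjI allI impI)
  assume m: "\<mu> \<in> PM t C"
  fix x assume "x \<notin> C" then show "\<mu> x = x" using m by (simp add: PM_def)
next
  assume m: "\<mu> \<in> PM t C"
  fix y show "\<exists>!x. \<mu> x = y"
  proof
    show "\<mu> (\<mu> y) = y" by (rule PM_inv[OF m])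
    fix x assume "\<mu> x = y" then show "x = \<mu> y" using PM_inv[OF m, of x] by simp
  qed
qed

lemma finite_PM: "finite C \<Longrightarrow> finite (PM t C)"
  by (rule finite_subset[of _ "{\<mu>. \<mu> permutes C}"]) (auto intro: PM_permutes finite_permutations)

lemma mu_Psi:
  assumes h: "0 < h" and m: "\<mu> \<in> PM (\<lambda>c. h \<le> v c) C" and b: "\<beta> \<in> bijs {..<h} (Em C \<mu>)"
  shows "mu h C (Psi h \<mu> \<beta>) = \<mu>" "restrict (Psi h \<mu> \<beta>) {..<h} = \<beta>"
proof -
  let ?f = "Psi h \<mu> \<beta>"
  have fm: "?f \<in> {f\<in>Ord h C. valid h v f}" by (rule Psi_mem[OF m b])
  hence fb: "?f \<in> bijs {..<2*h} C" by (simp add: Ord_def)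
  have bE: "\<And>i. i < h \<Longrightarrow> \<beta> i \<in> C" using b by (auto simp: bijs_def PiE_iff Em_def)
  show "mu h C ?f = \<mu>"
  proof
    fix c show "mu h C ?f c = \<mu> c"
    proof (cases "c \<in> C")
      case False then show ?thesis using PM_out[OF m False] by (simp add: mu_def)
    next
      case True
      then obtain j where j: "j < 2*h" "c = ?f j" using fb by (auto simp: bijs_def bij_betw_def)
      have "mu h C ?f c = ?f (sw h {..<h} j)" using mu_app[OF fb j(1)] j by simp
      also have "\<dots> = \<mu> c"
      proof (cases "j < h")
        case True then show ?thesis using j by (simp add: sw_half_lo Psi_def)
      next
        case False
        hence "sw h {..<h} j = j - h" "j - h < h" using j by (auto simp: sw_half_hi)
        then show ?thesis using j False PM_inv[OF m] by (simp add: Psi_def)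
      qed
      finally show ?thesis .
    qed
  qed
  show "restrict ?f {..<h} = \<beta>"
  proof
    fix j show "restrict ?f {..<h} j = \<beta> j"
      using b by (cases "j < h") (auto simp: Psi_def bijs_def PiE_iff extensional_def)
  qed
qed

lemma Psi_mu:
  assumes h: "0 < h" and f: "f \<in> {f\<in>Ord h C. valid h v f}"
  shows "Psi h (mu h C f) (restrict f {..<h}) = f"
proof
  have fb: "f \<in> bijs {..<2*h} C" using f by (simp add: Ord_def)
  fix j show "Psi h (mu h C f) (restrict f {..<h}) j = f j"
  proof (cases "j < 2*h")
    case False then show ?thesis using fb by (auto simp: Psi_def bijs_def PiE_iff extensional_def)
  next
    case True
    show ?thesis
    proof (cases "j < h")
      case True then show ?thesis by (simp add: Psi_def)
    next
      case False
      hence "j - h < h" "j - h < 2*h" using \<open>j < 2*h\<close> by auto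
      hence "mu h C f (f (j - h)) = f (j - h + h)" using mu_app[OF fb] sw_half_lo by simp
      then show ?thesis using False \<open>j < 2*h\<close> \<open>j - h < h\<close> by (simp add: Psi_def)
    qed
  qed
qed

lemma Psi_bij:
  assumes h: "0 < h"
  shows "bij_betw (\<lambda>(\<mu>,\<beta>). Psi h \<mu> \<beta>) (Sigma (PM (\<lambda>c. h \<le> v c) C) (\<lambda>\<mu>. bijs {..<h} (Em C \<mu>)))
           {f\<in>Ord h C. valid h v f}"
proof (rule bij_betw_byWitness[where f'="\<lambda>f. (mu h C f, restrict f {..<h})"])
  show "\<forall>a\<in>Sigma (PM (\<lambda>c. h \<le> v c) C) (\<lambda>\<mu>. bijs {..<h} (Em C \<mu>)). (\<lambda>f. (mu h C f, restrict f {..<h})) ((\<lambda>(\<mu>,\<beta>). Psi h \<mu> \<beta>) a) = a"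
    using mu_Psi[OF h] by auto
  show "\<forall>a'\<in>{f\<in>Ord h C. valid h v f}. (\<lambda>(\<mu>,\<beta>). Psi h \<mu> \<beta>) ((\<lambda>f. (mu h C f, restrict f {..<h})) a') = a'"
    using Psi_mu[OF h] by auto
  show "(\<lambda>(\<mu>,\<beta>). Psi h \<mu> \<beta>) ` Sigma (PM (\<lambda>c. h \<le> v c) C) (\<lambda>\<mu>. bijs {..<h} (Em C \<mu>)) \<subseteq> {f\<in>Ord h C. valid h v f}"
    using Psi_mem by auto
  show "(\<lambda>f. (mu h C f, restrict f {..<h})) ` {f\<in>Ord h C. valid h v f} \<subseteq> Sigma (PM (\<lambda>c. h \<le> v c) C) (\<lambda>\<mu>. bijs {..<h} (Em C \<mu>))"
    using mu_mem[OF h] by blast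
qed

lemma finite_Em: "finite C \<Longrightarrow> finite (Em C \<mu>)" by (simp add: Em_def)

lemma step4:
  assumes fC: "finite C"
  shows "(\<Sum>f\<in>{f\<in>Ord (2^k) C. valid (2^k) v f}. G k v f) =
         (\<Sum>\<mu>\<in>PM (\<lambda>c. 2^k \<le> v c) C. P k (Em C \<mu>) (\<lambda>a. wv k v a (\<mu> a)))"
proof -
  let ?h = "2^k :: nat"
  let ?S = "Sigma (PM (\<lambda>c. ?h \<le> v c) C) (\<lambda>\<mu>. bijs {..<?h} (Em C \<mu>))"
  have "(\<Sum>f\<in>{f\<in>Ord ?h C. valid ?h v f}. G k v f) = (\<Sum>x\<in>?S. G k v ((\<lambda>(\<mu>,\<beta>). Psi ?h \<mu> \<beta>) x))"
    by (rule sum.reindex_bij_betw[symmetric]) (rule Psi_bij, simp)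
  also have "\<dots> = (\<Sum>\<mu>\<in>PM (\<lambda>c. ?h \<le> v c) C. \<Sum>\<beta>\<in>bijs {..<?h} (Em C \<mu>). G k v (Psi ?h \<mu> \<beta>))"
    by (simp add: split_def sum.Sigma finite_PM finite_bijs fC finite_Em)
  also have "\<dots> = (\<Sum>\<mu>\<in>PM (\<lambda>c. 2^k \<le> v c) C. P k (Em C \<mu>) (\<lambda>a. wv k v a (\<mu> a)))"
    unfolding P_def G_def by (intro sum.cong refl prod.cong) (auto simp: Psi_def)
  finally show ?thesis .
qed

lemma card_Em:
  assumes fC: "finite C" and m: "\<mu> \<in> PM t C"
  shows "card (Em C \<mu>) * 2 = card C"
proof -
  have U: "C = Em C \<mu> \<union> \<mu> ` Em C \<mu>"
  proof
    show "C \<subseteq> Em C \<mu> \<union> \<mu> ` Em C \<mu>"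
    proof
      fix c assume c: "c \<in> C"
      show "c \<in> Em C \<mu> \<union> \<mu> ` Em C \<mu>"
      proof (cases "c \<in> Em C \<mu>")
        case False
        hence "\<mu> c \<in> Em C \<mu>" by (rule Em_comp[OF m c])
        hence "\<mu> (\<mu> c) \<in> \<mu> ` Em C \<mu>" by blast
        then show ?thesis using PM_inv[OF m] by simp
      qed simp
    qed
    show "Em C \<mu> \<union> \<mu> ` Em C \<mu> \<subseteq> C" using PM_D(1)[OF m] by (auto simp: Em_def)
  qed
  have inj: "inj_on \<mu> (Em C \<mu>)" by (rule inj_onI) (metis PM_inv[OF m])
  have "card C = card (Em C \<mu>) + card (\<mu> ` Em C \<mu>)"
    by (subst U, rule card_Un_disjoint) (auto simp: fC finite_Em dest: Em_not[OF m])
  also have "card (\<mu> ` Em C \<mu>) = card (Em C \<mu>)" by (rule card_image[OF inj])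
  finally show ?thesis by simp
qed

lemma Z_transfer:
  assumes fC: "finite C" and m: "\<mu> \<in> PM t C" and v: "\<forall>c\<in>C. v c < 2*2^k" and i: "i < 2^k"
    and Z: "(\<Prod>c\<in>C. sylvester (Suc k) i (v c)) = 1"
  shows "(\<Prod>a\<in>Em C \<mu>. sylvester k i (wv k v a (\<mu> a))) = 1"
proof -
  let ?g = "\<lambda>c. sylvester k i (v c mod 2^k)"
  have EC: "Em C \<mu> \<subseteq> C" by (auto simp: Em_def)
  have U: "C = Em C \<mu> \<union> \<mu> ` Em C \<mu>"
  proof
    show "C \<subseteq> Em C \<mu> \<union> \<mu> ` Em C \<mu>"
    proof
      fix c assume c: "c \<in> C"
      show "c \<in> Em C \<mu> \<union> \<mu> ` Em C \<mu>"
      proof (cases "c \<in> Em C \<mu>")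
        case False
        hence "\<mu> c \<in> Em C \<mu>" by (rule Em_comp[OF m c])
        hence "\<mu> (\<mu> c) \<in> \<mu> ` Em C \<mu>" by blast
        then show ?thesis using PM_inv[OF m] by simp
      qed simp
    qed
    show "Em C \<mu> \<union> \<mu> ` Em C \<mu> \<subseteq> C" using PM_D(1)[OF m] by (auto simp: Em_def)
  qed
  have inj: "inj_on \<mu> (Em C \<mu>)" by (rule inj_onI) (metis PM_inv[OF m])
  have "(\<Prod>a\<in>Em C \<mu>. sylvester k i (wv k v a (\<mu> a))) = (\<Prod>a\<in>Em C \<mu>. ?g a * ?g (\<mu> a))"
    unfolding wv_def by (rule prod.cong[OF refl], rule vx_mult) (use i in auto)
  also have "\<dots> = (\<Prod>a\<in>Em C \<mu>. ?g a) * (\<Prod>a\<in>\<mu> ` Em C \<mu>. ?g a)"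
    by (simp add: prod.distrib prod.reindex[OF inj])
  also have "\<dots> = (\<Prod>c\<in>C. ?g c)"
    by (subst (3) U, rule prod.union_disjoint[symmetric]) (auto simp: fC finite_Em dest: Em_not[OF m])
  also have "\<dots> = (\<Prod>c\<in>C. sylvester (Suc k) i (v c))"
  proof (rule prod.cong[OF refl])
    fix c assume c: "c \<in> C"
    have "i < 2*2^k" "v c < 2*2^k" using i v c by auto
    then show "?g c = sylvester (Suc k) i (v c)" using syl_Suc i by simp
  qed
  finally show ?thesis using Z by simp
qed



lemma PM_empty: "PM t {} = {id}"
  by (auto simp: PM_def)

lemma PM_fiber_card:
  assumes x: "x \<in> C" and y: "y \<in> C" "y \<noteq> x" "t y = t x"
  shows "card {\<mu>\<in>PM t C. \<mu> x = y} = card (PM t (C - {x,y}))"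
proof -
  let ?r = "\<lambda>\<mu>. (\<lambda>z. if z = x \<or> z = y then z else \<mu> z)"
  let ?e = "\<lambda>\<nu>. \<nu>(x := y, y := x)"
  show ?thesis
  proof (rule bij_betw_same_card[of ?r], rule bij_betw_byWitness[where f'="?e"])
    show "\<forall>\<mu>\<in>{\<mu>\<in>PM t C. \<mu> x = y}. ?e (?r \<mu>) = \<mu>"
    proof
      fix \<mu> assume m: "\<mu> \<in> {\<mu>\<in>PM t C. \<mu> x = y}"
      hence m1: "\<mu> \<in> PM t C" "\<mu> x = y" by auto
      have "\<mu> y = x" using PM_inv[OF m1(1), of x] m1(2) by simp
      then show "?e (?r \<mu>) = \<mu>" using m1 y by (auto simp: fun_eq_iff)
    qed
    show "\<forall>\<nu>\<in>PM t (C - {x,y}). ?r (?e \<nu>) = \<nu>"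
    proof
      fix \<nu> assume n: "\<nu> \<in> PM t (C - {x,y})"
      have "\<nu> x = x" "\<nu> y = y" using PM_out[OF n] by auto
      then show "?r (?e \<nu>) = \<nu>" using y by (auto simp: fun_eq_iff)
    qed
    show "?r ` {\<mu>\<in>PM t C. \<mu> x = y} \<subseteq> PM t (C - {x,y})"
    proof
      fix \<nu> assume "\<nu> \<in> ?r ` {\<mu>\<in>PM t C. \<mu> x = y}"
      then obtain \<mu> where m: "\<mu> \<in> PM t C" "\<mu> x = y" and nu: "\<nu> = ?r \<mu>" by auto
      have my: "\<mu> y = x" using PM_inv[OF m(1), of x] m(2) by simp
      show "\<nu> \<in> PM t (C - {x,y})"
        unfolding PM_def
      proof (intro CollectI conjI allI impI ballI)
        fix z assume "z \<notin> C - {x,y}" then show "\<nu> z = z" using PM_out[OF m(1)] nu by auto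
      next
        fix z assume z: "z \<in> C - {x,y}"
        have a: "\<mu> z \<in> C" "\<mu> z \<noteq> z" "\<mu> (\<mu> z) = z" "t (\<mu> z) = t z" using PM_D[OF m(1)] z by auto
        have b: "\<mu> z \<noteq> x" using a(3) m(2) z by auto
        have c: "\<mu> z \<noteq> y" using a(3) my z by auto
        show "\<nu> z \<in> C - {x,y}" using a b c z nu by auto
        show "\<nu> z \<noteq> z" using a z nu by auto
        show "\<nu> (\<nu> z) = z" using a b c z nu by auto
        show "t (\<nu> z) = t z" using a z nu by auto
      qed
    qed
    show "?e ` PM t (C - {x,y}) \<subseteq> {\<mu>\<in>PM t C. \<mu> x = y}"
    proof
      fix \<mu> assume "\<mu> \<in> ?e ` PM t (C - {x,y})"
      then obtain \<nu> where n: "\<nu> \<in> PM t (C - {x,y})" and mu: "\<mu> = ?e \<nu>" by auto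
      have "\<mu> \<in> PM t C"
        unfolding PM_def
      proof (rule CollectI, rule conjI)
        show "\<forall>z. z \<notin> C \<longrightarrow> \<mu> z = z" using PM_out[OF n] mu x y by auto
        show "\<forall>z\<in>C. \<mu> z \<in> C \<and> \<mu> z \<noteq> z \<and> \<mu> (\<mu> z) = z \<and> t (\<mu> z) = t z"
        proof
          fix z assume z: "z \<in> C"
          show "\<mu> z \<in> C \<and> \<mu> z \<noteq> z \<and> \<mu> (\<mu> z) = z \<and> t (\<mu> z) = t z"
          proof (cases "z = x \<or> z = y")
            case True then show ?thesis using mu x y by auto
          next
            case False
            hence zz: "z \<in> C - {x,y}" using z by auto
            have a: "\<nu> z \<in> C - {x,y}" "\<nu> z \<noteq> z" "\<nu> (\<nu> z) = z" "t (\<nu> z) = t z" using PM_D[OF n zz] by auto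
            then show ?thesis using mu False by auto
          qed
        qed
      qed
      moreover have "\<mu> x = y" using mu y by auto
      ultimately show "\<mu> \<in> {\<mu>\<in>PM t C. \<mu> x = y}" by simp
    qed
  qed
qed

lemma pm_odd:
  "finite C \<Longrightarrow> even (card {c\<in>C. t c}) \<Longrightarrow> even (card {c\<in>C. \<not> t c}) \<Longrightarrow> odd (card (PM t C))"
proof (induction "card C" arbitrary: C rule: less_induct)
  case less
  show ?case
  proof (cases "C = {}")
    case True then show ?thesis by (simp add: PM_empty)
  next
    case False
    then obtain x where x: "x \<in> C" by auto
    let ?D = "{y\<in>C. t y = t x \<and> y \<noteq> x}"
    have fD: "finite ?D" using less.prems by auto
    have cls: "even (card {c\<in>C. t c = t x})"
      using less.prems by (cases "t x") auto
    have "{c\<in>C. t c = t x} = insert x ?D" using x by auto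
    hence "card {c\<in>C. t c = t x} = Suc (card ?D)" using fD by simp
    hence oD: "odd (card ?D)" using cls by simp
    have U: "PM t C = (\<Union>y\<in>?D. {\<mu>\<in>PM t C. \<mu> x = y})"
    proof
      show "PM t C \<subseteq> (\<Union>y\<in>?D. {\<mu>\<in>PM t C. \<mu> x = y})"
      proof
        fix \<mu> assume m: "\<mu> \<in> PM t C"
        have "\<mu> x \<in> ?D" using PM_D[OF m x] by auto
        then show "\<mu> \<in> (\<Union>y\<in>?D. {\<mu>\<in>PM t C. \<mu> x = y})" using m by blast
      qed
    qed blast
    have "card (PM t C) = card (\<Union>y\<in>?D. {\<mu>\<in>PM t C. \<mu> x = y})"
      by (rule arg_cong[where f=card, OF U])
    also have "\<dots> = (\<Sum>y\<in>?D. card {\<mu>\<in>PM t C. \<mu> x = y})"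
    proof (rule card_UN_disjoint[OF fD])
      show "\<forall>y\<in>?D. finite {\<mu>\<in>PM t C. \<mu> x = y}" using finite_PM[OF less.prems(1)] by auto
      show "\<forall>i\<in>?D. \<forall>j\<in>?D. i \<noteq> j \<longrightarrow> {\<mu>\<in>PM t C. \<mu> x = i} \<inter> {\<mu>\<in>PM t C. \<mu> x = j} = {}" by blast
    qed
    also have "\<dots> = (\<Sum>y\<in>?D. card (PM t (C - {x,y})))"
      by (rule sum.cong[OF refl]) (rule PM_fiber_card, use x in auto)
    finally have cs: "card (PM t C) = (\<Sum>y\<in>?D. card (PM t (C - {x,y})))" .
    have each: "\<forall>y\<in>?D. odd (card (PM t (C - {x,y})))"
    proof
      fix y assume y: "y \<in> ?D"
      have lt: "card (C - {x,y}) < card C" using x y less.prems by (intro psubset_card_mono) auto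
      have e1: "even (card {c\<in>C - {x,y}. t c})"
      proof (cases "t x")
        case True
        have "{c\<in>C. t c} = insert x (insert y {c\<in>C - {x,y}. t c})" using x y True by auto
        hence "card {c\<in>C. t c} = Suc (Suc (card {c\<in>C - {x,y}. t c}))" using y less.prems by auto
        then show ?thesis using less.prems by simp
      next
        case False
        have "{c\<in>C. t c} = {c\<in>C - {x,y}. t c}" using x y False by auto
        then show ?thesis using less.prems by simp
      qed
      have e2: "even (card {c\<in>C - {x,y}. \<not> t c})"
      proof (cases "t x")
        case False
        have "{c\<in>C. \<not> t c} = insert x (insert y {c\<in>C - {x,y}. \<not> t c})" using x y False by auto
        hence "card {c\<in>C. \<not> t c} = Suc (Suc (card {c\<in>C - {x,y}. \<not> t c}))" using y less.prems by auto
        then show ?thesis using less.prems by simp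
      next
        case True
        have "{c\<in>C. \<not> t c} = {c\<in>C - {x,y}. \<not> t c}" using x y True by auto
        then show ?thesis using less.prems by simp
      qed
      show "odd (card (PM t (C - {x,y})))"
        by (rule less.hyps[OF lt]) (use less.prems e1 e2 in auto)
    qed
    have "{y\<in>?D. odd (card (PM t (C - {x,y})))} = ?D" using each by auto
    then show ?thesis unfolding cs using even_sum_iff[OF fD, of "\<lambda>y. card (PM t (C - {x,y}))"] oD by simp
  qed
qed



lemma base_case:
  assumes fC: "finite C" and c: "card C = 1"
  shows "P 0 C v = 1"
proof -
  obtain c0 where C: "C = {c0}" using c card_1_singletonE by blast
  have "bijs {..<1} C = {..<1} \<rightarrow>\<^sub>E C"
  proof
    show "{..<1} \<rightarrow>\<^sub>E C \<subseteq> bijs {..<1} C"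
    proof
      fix f assume f: "f \<in> {..<1::nat} \<rightarrow>\<^sub>E C"
      hence "f 0 = c0" using C by auto
      hence "bij_betw f {..<1} C" using C by (simp add: bij_betw_def lessThan_Suc)
      then show "f \<in> bijs {..<1} C" using f by (simp add: bijs_def)
    qed
  qed (auto simp: bijs_def)
  moreover have "card ({..<1::nat} \<rightarrow>\<^sub>E C) = 1" using C by (simp add: card_PiE)
  ultimately show ?thesis unfolding P_def by (simp add: sylvester.simps(1))
qed

lemma fin_alg:
  fixes s P X Y R :: int
  assumes "s = 1 \<or> s = -1" "P = X * s * (Y + X * R)" "X = 2 * Y"
  shows "\<exists>q. P = X * Y + (X * X) * q"
proof (cases "s = 1")
  case True then show ?thesis using assms by (intro exI[of _ R]) (simp add: algebra_simps)
next
  case False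
  hence "s = -1" using assms by simp
  then show ?thesis using assms by (intro exI[of _ "- R - 1"]) (simp add: algebra_simps power2_eq_square)
qed

theorem main_T:
  "finite C \<Longrightarrow> card C = 2^k \<Longrightarrow> (\<forall>c\<in>C. v c < 2^k) \<Longrightarrow>
   (\<forall>i<2^k. (\<Prod>c\<in>C. sylvester k i (v c)) = 1) \<Longrightarrow>
   \<exists>q. P k C v = 2^(2^k - 1) + 2^(2^k) * q"
proof (induction k arbitrary: C v)
  case 0
  then show ?case using base_case[of C v] by simp
next
  case (Suc k)
  let ?h = "2^k :: nat"
  let ?t = "\<lambda>c. ?h \<le> v c"
  have fC: "finite C" and cC: "card C = 2 * ?h" and vC: "\<forall>c\<in>C. v c < 2 * ?h"
    and Z: "\<forall>i<2 * ?h. (\<Prod>c\<in>C. sylvester (Suc k) i (v c)) = 1" using Suc.prems by auto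
  have "(\<Prod>c\<in>C. sylvester (Suc k) ?h (v c)) = 1" using Z by simp
  moreover have "(\<Prod>c\<in>C. sylvester (Suc k) ?h (v c)) = (\<Prod>c\<in>C. if ?t c then -1 else 1)"
  proof (rule prod.cong[OF refl])
    fix c assume c: "c \<in> C"
    have "?h < 2 * ?h" "v c < 2 * ?h" using vC c by auto
    then show "sylvester (Suc k) ?h (v c) = (if ?t c then -1 else 1)"
      using syl_Suc syl_0row by simp
  qed
  ultimately have "(-1::int) ^ card {c\<in>C. ?t c} = 1" using prod_sign[OF fC, of ?t] by simp
  hence ev1: "even (card {c\<in>C. ?t c})" by (simp add: minus_one_power_iff split: if_splits)
  have "card {c\<in>C. ?t c} + card {c\<in>C. \<not> ?t c} = card C"
    using fC by (subst card_Un_disjoint[symmetric]) (auto intro: arg_cong[where f=card])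
  hence "even (card {c\<in>C. ?t c} + card {c\<in>C. \<not> ?t c})" using cC by simp
  hence ev2: "even (card {c\<in>C. \<not> ?t c})" using ev1 by simp
  have oddPM: "odd (card (PM ?t C))" by (rule pm_odd[OF fC ev1 ev2])
  have IHm: "\<forall>\<mu>\<in>PM ?t C. \<exists>q. P k (Em C \<mu>) (\<lambda>a. wv k v a (\<mu> a)) = 2^(?h - 1) + 2^?h * q"
  proof
    fix \<mu> assume m: "\<mu> \<in> PM ?t C"
    show "\<exists>q. P k (Em C \<mu>) (\<lambda>a. wv k v a (\<mu> a)) = 2^(?h - 1) + 2^?h * q"
    proof (rule Suc.IH)
      show "finite (Em C \<mu>)" by (rule finite_Em[OF fC])
      show "card (Em C \<mu>) = ?h" using card_Em[OF fC m] cC by simp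
      show "\<forall>c\<in>Em C \<mu>. wv k v c (\<mu> c) < ?h" by (simp add: wv_def vx_lt)
      show "\<forall>i<?h. (\<Prod>c\<in>Em C \<mu>. sylvester k i (wv k v c (\<mu> c))) = 1"
      proof (intro allI impI)
        fix i assume i: "i < ?h"
        show "(\<Prod>c\<in>Em C \<mu>. sylvester k i (wv k v c (\<mu> c))) = 1"
          by (rule Z_transfer[OF fC m vC i]) (use Z i in auto)
      qed
    qed
  qed
  then obtain q where q: "\<forall>\<mu>\<in>PM ?t C. P k (Em C \<mu>) (\<lambda>a. wv k v a (\<mu> a)) = 2^(?h - 1) + 2^?h * q \<mu>"
    using bchoice[OF IHm] by blast
  have "(\<Sum>\<mu>\<in>PM ?t C. P k (Em C \<mu>) (\<lambda>a. wv k v a (\<mu> a))) = (\<Sum>\<mu>\<in>PM ?t C. 2^(?h - 1) + 2^?h * q \<mu>)"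
    using q by (intro sum.cong) auto
  also have "\<dots> = int (card (PM ?t C)) * 2^(?h - 1) + 2^?h * (\<Sum>\<mu>\<in>PM ?t C. q \<mu>)"
    by (simp add: sum.distrib sum_distrib_left)
  finally have S: "(\<Sum>\<mu>\<in>PM ?t C. P k (Em C \<mu>) (\<lambda>a. wv k v a (\<mu> a))) =
      int (card (PM ?t C)) * 2^(?h - 1) + 2^?h * (\<Sum>\<mu>\<in>PM ?t C. q \<mu>)" .
  obtain m where m: "card (PM ?t C) = 2 * m + 1" using oddPM oddE by blast
  obtain r where hr: "?h = Suc r" using not0_implies_Suc[of ?h] by auto
  have hp: "(2::int)^?h = 2 * 2^r" using hr by simp
  have hr1: "?h - 1 = r" using hr by simp
  define R where "R = int m + (\<Sum>\<mu>\<in>PM ?t C. q \<mu>)"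
  have S2: "(\<Sum>\<mu>\<in>PM ?t C. P k (Em C \<mu>) (\<lambda>a. wv k v a (\<mu> a))) = 2^r + 2^?h * R"
  proof -
    have "int (card (PM ?t C)) * 2^(?h - 1) + 2^?h * (\<Sum>\<mu>\<in>PM ?t C. q \<mu>)
        = (2 * int m + 1) * 2^r + (2 * 2^r) * (\<Sum>\<mu>\<in>PM ?t C. q \<mu>)"
      unfolding m hr1 hp by simp
    also have "\<dots> = 2^r + (2 * 2^r) * R" unfolding R_def by (simp add: algebra_simps)
    finally show ?thesis unfolding S hp .
  qed
  have Pv: "P (Suc k) C v = 2^?h * (-1) ^ (card {c\<in>C. ?h \<le> v c} div 2) * (2^r + 2^?h * R)"
    using step3[OF vC fC] step4[OF fC, of k v] S2 by simp
  have e1: "2^Suc k - 1 = ?h + r" using hr by simp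
  have e: "(2::int)^(2^Suc k - 1) = 2^?h * 2^r" "(2::int)^(2^Suc k) = 2^?h * 2^?h"
    by (simp only: e1 power_add) (simp only: power_Suc mult_2 power_add)
  have sg: "(-1::int) ^ (card {c\<in>C. ?h \<le> v c} div 2) = 1 \<or> (-1::int) ^ (card {c\<in>C. ?h \<le> v c} div 2) = -1"
    by (simp add: minus_one_power_iff)
  show ?case unfolding e using fin_alg[OF sg Pv hp] .
qed



lemma perm_eq_P:
  "perm n A = (\<Sum>f\<in>bijs {..<n} {..<n}. \<Prod>i<n. A i (f i))"
proof -
  let ?r = "\<lambda>\<sigma>. restrict \<sigma> {..<n}"
  let ?g = "\<lambda>f x. if x < n then f x else x"
  have bij: "bij_betw ?r {\<sigma>. \<sigma> permutes {..<n}} (bijs {..<n} {..<n})"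
  proof (rule bij_betw_byWitness[where f'="?g"])
    show "\<forall>\<sigma>\<in>{\<sigma>. \<sigma> permutes {..<n}}. ?g (?r \<sigma>) = \<sigma>"
    proof
      fix \<sigma> assume s: "\<sigma> \<in> {\<sigma>. \<sigma> permutes {..<n}}"
      show "?g (?r \<sigma>) = \<sigma>"
      proof
        fix x show "?g (?r \<sigma>) x = \<sigma> x" using s by (auto simp: permutes_not_in)
      qed
    qed
    show "\<forall>f\<in>bijs {..<n} {..<n}. ?r (?g f) = f"
    proof
      fix f assume f: "f \<in> bijs {..<n} {..<n}"
      show "?r (?g f) = f"
      proof
        fix x show "?r (?g f) x = f x" using f by (auto simp: bijs_def PiE_iff extensional_def)
      qed
    qed
    show "?r ` {\<sigma>. \<sigma> permutes {..<n}} \<subseteq> bijs {..<n} {..<n}"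
    proof
      fix f assume "f \<in> ?r ` {\<sigma>. \<sigma> permutes {..<n}}"
      then obtain \<sigma> where s: "\<sigma> permutes {..<n}" and f: "f = ?r \<sigma>" by auto
      have "bij_betw \<sigma> {..<n} {..<n}" by (rule permutes_imp_bij[OF s])
      hence "bij_betw f {..<n} {..<n}" unfolding f by (rule bij_betw_cong[THEN iffD1, rotated]) simp
      moreover have "f \<in> {..<n} \<rightarrow>\<^sub>E {..<n}" unfolding f using permutes_in_image[OF s] by auto
      ultimately show "f \<in> bijs {..<n} {..<n}" by (simp add: bijs_def)
    qed
    show "?g ` bijs {..<n} {..<n} \<subseteq> {\<sigma>. \<sigma> permutes {..<n}}"
    proof
      fix \<sigma> assume "\<sigma> \<in> ?g ` bijs {..<n} {..<n}"
      then obtain f where f: "f \<in> bijs {..<n} {..<n}" and s: "\<sigma> = ?g f" by auto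
      have "bij_betw f {..<n} {..<n}" using f by (simp add: bijs_def)
      hence "bij_betw \<sigma> {..<n} {..<n}" unfolding s by (rule bij_betw_cong[THEN iffD1, rotated]) simp
      moreover have "\<And>x. x \<notin> {..<n} \<Longrightarrow> \<sigma> x = x" unfolding s by simp
      ultimately have "\<sigma> permutes {..<n}" by (intro bij_imp_permutes) auto
      then show "\<sigma> \<in> {\<sigma>. \<sigma> permutes {..<n}}" by simp
    qed
  qed
  have "perm n A = (\<Sum>\<sigma>\<in>{\<sigma>. \<sigma> permutes {..<n}}. (\<lambda>f. \<Prod>i<n. A i (f i)) (?r \<sigma>))"
    unfolding perm_def by (intro sum.cong refl prod.cong) auto
  also have "\<dots> = (\<Sum>f\<in>bijs {..<n} {..<n}. \<Prod>i<n. A i (f i))"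
    by (rule sum.reindex_bij_betw[OF bij])
  finally show ?thesis .
qed

lemma rowprod:
  assumes i: "i < 2^Suc k" and k: "k \<ge> 1"
  shows "(\<Prod>j\<in>{..<2^Suc k}. sylvester (Suc k) i j) = 1"
proof -
  let ?h = "2^k :: nat"
  let ?sg = "(if ?h \<le> i then -1 else 1 :: int)"
  have "(\<Prod>j\<in>{..<2*?h}. sylvester (Suc k) i j) = (\<Prod>j<?h. sylvester (Suc k) i j * sylvester (Suc k) i (j + ?h))"
    by (rule prod_split2)
  also have "\<dots> = (\<Prod>j<?h. ?sg)"
  proof (rule prod.cong[OF refl])
    fix j assume j: "j \<in> {..<?h}"
    have l: "i < 2*?h" "j < 2*?h" "j + ?h < 2*?h" using i j by auto
    show "sylvester (Suc k) i j * sylvester (Suc k) i (j + ?h) = ?sg"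
      unfolding syl_Suc[OF l(1) l(2)] syl_Suc[OF l(1) l(3)] using j syl_sq[of k "i mod ?h" j] by auto
  qed
  also have "\<dots> = ?sg ^ ?h" by simp
  also have "\<dots> = 1"
  proof -
    have "even ?h" using k by (simp add: Suc_le_eq)
    then show ?thesis by (auto simp: minus_one_power_iff)
  qed
  finally show ?thesis by simp
qed

lemma perm_sylvester_ne0:
  assumes p: "p \<ge> 2"
  shows "perm (2^p) (sylvester p) \<noteq> 0"
proof -
  obtain k where pk: "p = Suc k" "k \<ge> 1" using p by (cases p) auto
  have Z: "\<forall>i<2^p. (\<Prod>c\<in>{..<2^p}. sylvester p i (id c)) = 1"
    using rowprod pk by simp
  obtain q where q: "P p {..<2^p} id = 2^(2^p - 1) + 2^(2^p) * q"
    using main_T[of "{..<2^p}" p id] Z by auto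
  have eq: "perm (2^p) (sylvester p) = P p {..<2^p} id"
    unfolding perm_eq_P P_def by simp
  show ?thesis
  proof
    assume "perm (2^p) (sylvester p) = 0"
    hence z: "(2::int)^(2^p - 1) + 2^(2^p) * q = 0" using eq q by simp
    have "(2::int)^(2^p) = 2 * 2^(2^p - 1)"
    proof -
      have "2^p = Suc (2^p - 1)" by simp
      then show ?thesis by (metis power_Suc)
    qed
    hence "(2::int)^(2^p - 1) * (1 + 2 * q) = 0" using z by (simp add: algebra_simps)
    hence "1 + 2 * q = 0" by simp
    then show False by presburger
  qed
qed



lemma perm_cong:
  assumes "\<And>i j. i < n \<Longrightarrow> j < n \<Longrightarrow> A i j = B i j"
  shows "perm n A = perm n B"
  unfolding perm_def
proof (rule sum.cong[OF refl], rule prod.cong[OF refl])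
  fix \<sigma> i assume s: "\<sigma> \<in> {\<sigma>. \<sigma> permutes {..<n}}" and i: "i \<in> {..<n}"
  have "\<sigma> i < n" using permutes_in_image[of \<sigma> "{..<n}" i] s i by auto
  then show "A i (\<sigma> i) = B i (\<sigma> i)" using assms i by auto
qed

lemma perm_scaled:
  fixes S :: "nat \<Rightarrow> nat \<Rightarrow> int" and c :: complex
  shows "perm n (\<lambda>i j. of_int (S i j) / c) = of_int (perm n S) / c ^ n"
  unfolding perm_def by (simp add: prod_dividef sum_divide_distrib of_int_sum of_int_prod)

lemma mult_upt: "k < n \<Longrightarrow> mult [0..<n] k = 1"
proof -
  assume k: "k < n"
  have "mult [0..<n] k = card {i. i < length [0..<n] \<and> [0..<n] ! i = k}"
    unfolding mult_def by (rule length_filter_conv_card)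
  also have "{i. i < length [0..<n] \<and> [0..<n] ! i = k} = {k}" using k by auto
  finally show ?thesis by simp
qed

theorem mainTheorem10:
  fixes p :: nat
  assumes "p \<ge> 2"
  shows "perm (2 ^ p) (sylvester p) \<noteq> 0 \<and>
         \<not> suppressed (\<lambda>i j. of_int (sylvester p i j) / complex_of_real (sqrt (real (2 ^ p))))
                       [0..<2 ^ p] [0..<2 ^ p]"
proof
  show ne: "perm (2 ^ p) (sylvester p) \<noteq> 0" by (rule perm_sylvester_ne0[OF assms])
  let ?n = "2^p :: nat"
  let ?c = "complex_of_real (sqrt (real (2 ^ p)))"
  let ?U = "\<lambda>i j. of_int (sylvester p i j) / ?c"
  have c0: "?c \<noteq> 0" by simp
  have den: "(\<Prod>k\<in>set [0..<?n]. fact (mult [0..<?n] k)) = (1::nat)"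
    by (rule prod.neutral) (auto simp: mult_upt)
  have "amplitude ?U [0..<?n] [0..<?n] = perm ?n (scattering ?U [0..<?n] [0..<?n])"
    unfolding amplitude_def den by simp
  also have "\<dots> = perm ?n ?U"
    by (rule perm_cong) (simp add: scattering_def)
  also have "\<dots> = of_int (perm ?n (sylvester p)) / ?c ^ ?n"
    by (rule perm_scaled)
  finally have "amplitude ?U [0..<?n] [0..<?n] = of_int (perm ?n (sylvester p)) / ?c ^ ?n" .
  moreover have "of_int (perm ?n (sylvester p)) / ?c ^ ?n \<noteq> (0::complex)"
    using ne c0 by simp
  ultimately show "\<not> suppressed ?U [0..<?n] [0..<?n]" by (simp add: suppressed_def)
qed


end
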